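(* Let $S\subseteq(0,\infty)$ contain more than one point and let $T$ be a closed subset of $(0,\infty)$ with $\varnothing\ne T\ne(0,\infty)$. If $S$ divides $T$, then there exist $a>1$ and $B\subseteq[1,a)$ such that $T=a^{\mathbb{Z}}B:=\{a^kb:k\in\mathbb{Z},\ b\in B\}$ and $a\le s'/s$ for all $s<s'$ in $S$.
   Context: For $S,T_1,T_2\subseteq(0,\infty)$, $S$ links $T_1$ and $T_2$ if there is $c>0$ with $cS\cap T_1\ne\varnothing$ and $cS\cap T_2\ne\varnothing$, where $cS=\{cs:s\in S\}$. $S$ divides $T$ (written $S\mid T$) if $S$ does not link $T$ and $T^C:=(0,\infty)\setminus T$. *)

theory Defs
  imports "HOL-Analysis.Analysis"
begin

definition scale_set :: "real \<Rightarrow> real set \<Rightarrow> real set" where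
  "scale_set c S = (\<lambda>s. c * s) ` S"

definition pos_compl :: "real set \<Rightarrow> real set" where
  "pos_compl T = {0<..} - T"

definition links :: "real set \<Rightarrow> real set \<Rightarrow> real set \<Rightarrow> bool" where
  "links S T1 T2 \<longleftrightarrow> (\<exists>c>0. scale_set c S \<inter> T1 \<noteq> {} \<and> scale_set c S \<inter> T2 \<noteq> {})"

definition divides :: "real set \<Rightarrow> real set \<Rightarrow> bool" where
  "divides S T \<longleftrightarrow> \<not> links S T (pos_compl T)"

end

theory Submission
  imports Defs
begin

lemma floor_powi:
  fixes g y :: real
  assumes "g > 1" "y > 0"
  shows "\<exists>n::int. g powi n \<le> y \<and> y < g powi (n+1)"
proof -
  define n where "n = \<lfloor>log g y\<rfloor>"
  have "g powr (real_of_int n) \<le> g powr (log g y)"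
    using assms by (intro powr_mono) (auto simp: n_def)
  moreover have "g powr (log g y) < g powr (real_of_int (n+1))"
    using assms by (intro powr_less_mono) (auto simp: n_def)
  ultimately show ?thesis using assms
    by (intro exI[of _ n]) (simp add: powr_real_of_int' del: of_int_add)
qed

definition inv_sc :: "real set \<Rightarrow> real \<Rightarrow> bool" where
  "inv_sc T g \<longleftrightarrow> g > 0 \<and> (\<forall>t>0. g * t \<in> T \<longleftrightarrow> t \<in> T)"

lemma inv_sc_mult: "inv_sc T g \<Longrightarrow> inv_sc T h \<Longrightarrow> inv_sc T (g*h)"
  unfolding inv_sc_def by (auto simp: mult.assoc)

lemma inv_sc_inverse: "inv_sc T g \<Longrightarrow> inv_sc T (inverse g)"
  unfolding inv_sc_def
proof (intro conjI allI impI)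
  fix t :: real
  assume a: "0 < g \<and> (\<forall>t>0. (g * t \<in> T) = (t \<in> T))" and t: "t > 0"
  have "(g * (inverse g * t) \<in> T) = (inverse g * t \<in> T)" using a t by auto
  moreover have "g * (inverse g * t) = t" using a by simp
  ultimately show "(inverse g * t \<in> T) = (t \<in> T)" by simp
qed auto

lemma inv_sc_one: "inv_sc T 1"
  unfolding inv_sc_def by auto

lemma inv_sc_power: "inv_sc T g \<Longrightarrow> inv_sc T (g ^ m)"
  by (induction m) (auto intro: inv_sc_mult inv_sc_one)

lemma inv_sc_powi: "inv_sc T g \<Longrightarrow> inv_sc T (g powi n)"
  by (auto simp: power_int_def intro: inv_sc_power inv_sc_inverse)

lemma no_small:
  fixes T :: "real set"
  assumes "T \<subseteq> {0<..}" "closedin (top_of_set {0<..}) T" "T \<noteq> {}" "T \<noteq> {0<..}"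
    and sm: "\<forall>d>1. \<exists>g. inv_sc T g \<and> 1 < g \<and> g < d"
  shows False
proof -
  obtain C where C: "closed C" "T = {0<..} \<inter> C" using assms(2) closedin_closed by blast
  obtain x where x: "x > 0" "x \<notin> T" using assms(1,4) by blast
  then have "x \<notin> C" using C by auto
  then obtain e where e0: "e > 0" "ball x e \<subseteq> -C"
    using C(1) open_contains_ball[of "-C"] by (auto simp: closed_def)
  hence e: "e > 0" "ball x e \<inter> C = {}" by auto
  obtain t where t: "t \<in> T" using assms(3) by blast
  have tp: "t > 0" using t assms(1) by auto
  have "1 + e / x > 1" using e x by simp
  then obtain g where g: "inv_sc T g" "1 < g" "g < 1 + e / x" using sm by blast
  obtain n where n: "g powi n \<le> x / t" "x / t < g powi (n+1)"
    using floor_powi[of g "x/t"] g x tp by auto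
  define z where "z = g powi n * t"
  have gp: "g powi n > 0" using g by auto
  have "z \<in> T" using inv_sc_powi[OF g(1), of n] t tp unfolding inv_sc_def z_def by auto
  have z1: "z \<le> x" using n(1) tp by (simp add: z_def field_simps)
  have "x < g * z" using n(2) tp g(2) by (simp add: z_def field_simps power_int_add)
  then have "x - z < (g - 1) * z" by (simp add: algebra_simps)
  also have "\<dots> \<le> (g - 1) * x" using z1 g(2) by (intro mult_left_mono) auto
  also have "\<dots> < e" using g(3) x by (simp add: field_simps)
  finally have "dist x z < e" using z1 by (simp add: dist_real_def)
  then have "z \<in> ball x e" by simp
  with \<open>z \<in> T\<close> C e show False by auto
qed

theorem proposition6p3:
  fixes S T :: "real set"
  assumes "S \<subseteq> {0<..}"
    and "\<exists>s\<in>S. \<exists>s'\<in>S. s \<noteq> s'"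
    and "T \<subseteq> {0<..}"
    and "closedin (top_of_set {0<..}) T"
    and "T \<noteq> {}" and "T \<noteq> {0<..}"
    and "divides S T"
  shows "\<exists>a::real. a > 1 \<and> (\<exists>B. B \<subseteq> {1..<a} \<and>
           T = {a powi k * b | k b. b \<in> B} \<and>
           (\<forall>s\<in>S. \<forall>s'\<in>S. s < s' \<longrightarrow> a \<le> s' / s))"
proof -
  have div: "(\<lambda>s. c * s) ` S \<subseteq> T \<or> (\<lambda>s. c * s) ` S \<inter> T = {}" if c: "c > 0" for c :: real
  proof -
    have "\<not> ((\<lambda>s. c * s) ` S \<inter> T \<noteq> {} \<and> (\<lambda>s. c * s) ` S \<inter> ({0<..} - T) \<noteq> {})"
      using assms(7) c unfolding divides_def links_def scale_set_def pos_compl_def by blast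
    moreover have "(\<lambda>s. c * s) ` S \<subseteq> {0<..}" using assms(1) c by auto
    ultimately show "(\<lambda>s. c * s) ` S \<subseteq> T \<or> (\<lambda>s. c * s) ` S \<inter> T = {}" by blast
  qed
  have ratio: "inv_sc T (s' / s)" if s: "s \<in> S" "s' \<in> S" for s s'
    unfolding inv_sc_def
  proof (intro conjI allI impI)
    show "s' / s > 0" using s assms(1) by (auto intro!: divide_pos_pos)
    fix t :: real assume t: "t > 0"
    have sp: "s > 0" "s' > 0" using s assms(1) by auto
    define c where "c = t / s"
    have c: "c > 0" using t sp by (simp add: c_def)
    have e1: "c * s = t" using sp by (simp add: c_def)
    have e2: "c * s' = s' / s * t" by (simp add: c_def)
    have "t \<in> (\<lambda>s. c * s) ` S" using e1 s by force
    moreover have "s' / s * t \<in> (\<lambda>s. c * s) ` S" using e2 s by force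
    ultimately show "(s' / s * t \<in> T) = (t \<in> T)" using div[OF c] by blast
  qed
  define G where "G = {g. inv_sc T g \<and> g > 1}"
  obtain s0 s1 where s01: "s0 \<in> S" "s1 \<in> S" "s0 < s1" using assms(2)
    by (metis linorder_neqE)
  have s0p: "s0 > 0" using s01 assms(1) by auto
  have "s1 / s0 \<in> G" using ratio[OF s01(1,2)] s01 s0p by (simp add: G_def)
  hence Gne: "G \<noteq> {}" by auto
  have Gbdd: "bdd_below G" unfolding G_def bdd_below_def by (rule exI[of _ 1]) auto
  define a where "a = Inf G"
  have a1: "a \<ge> 1" unfolding a_def using Gne by (intro cInf_greatest) (auto simp: G_def)
  have notsmall: "\<not> (\<forall>d>1. \<exists>g. inv_sc T g \<and> 1 < g \<and> g < d)"
    using no_small[OF assms(3-6)] by blast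
  have agt: "a > 1"
  proof (rule ccontr)
    assume "\<not> a > 1" hence a: "a = 1" using a1 by auto
    have "\<exists>g. inv_sc T g \<and> 1 < g \<and> g < d" if d: "d > 1" for d
    proof -
      obtain g where "g \<in> G" "g < d" using cInf_lessD[OF Gne, of d] d a a_def by auto
      thus ?thesis by (auto simp: G_def)
    qed
    with notsmall show False by blast
  qed
  have aG: "a \<in> G"
  proof (rule ccontr)
    assume na: "a \<notin> G"
    have "\<exists>g. inv_sc T g \<and> 1 < g \<and> g < d" if d: "d > 1" for d
    proof -
      obtain g1 where g1: "g1 \<in> G" "g1 < a * d" using cInf_lessD[OF Gne, of "a*d"] d agt a_def by auto
      have "a \<le> g1" using g1 Gbdd a_def by (simp add: cInf_lower)
      hence "a < g1" using na g1 by (metis order_le_less)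
      then obtain g2 where g2: "g2 \<in> G" "g2 < g1" using cInf_lessD[OF Gne, of g1] a_def by auto
      have "a \<le> g2" using g2 Gbdd a_def by (simp add: cInf_lower)
      have "inv_sc T (g1 * inverse g2)" using g1 g2
        by (intro inv_sc_mult inv_sc_inverse) (auto simp: G_def)
      moreover have "1 < g1 * inverse g2" using g2 agt \<open>a \<le> g2\<close> by (simp add: field_simps)
      moreover have "g1 * inverse g2 < d"
      proof -
        have "g1 < d * g2" using g1(2) \<open>a \<le> g2\<close> d
          by (smt (verit) mult_left_mono mult.commute)
        thus ?thesis using agt \<open>a \<le> g2\<close> by (simp add: field_simps)
      qed
      ultimately show ?thesis by blast
    qed
    with notsmall show False by blast
  qed
  hence ainv: "inv_sc T a" by (simp add: G_def)
  define B where "B = T \<inter> {1..<a}"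
  have "T = {a powi k * b | k b. b \<in> B}"
  proof
    show "{a powi k * b | k b. b \<in> B} \<subseteq> T"
    proof
      fix x assume "x \<in> {a powi k * b | k b. b \<in> B}"
      then obtain k b where x: "x = a powi k * b" "b \<in> B" by auto
      have "b > 0" "b \<in> T" using x(2) by (auto simp: B_def)
      thus "x \<in> T" using inv_sc_powi[OF ainv, of k] x unfolding inv_sc_def by auto
    qed
    show "T \<subseteq> {a powi k * b | k b. b \<in> B}"
    proof
      fix t assume t: "t \<in> T"
      hence tp: "t > 0" using assms(3) by auto
      obtain n where n: "a powi n \<le> t" "t < a powi (n+1)" using floor_powi[OF agt tp] by auto
      define b where "b = a powi (-n) * t"
      have ap: "a powi n > 0" using agt by auto
      have "b \<in> T" using inv_sc_powi[OF ainv, of "-n"] t tp unfolding inv_sc_def b_def by auto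
      moreover have "1 \<le> b" using n(1) ap by (simp add: b_def power_int_minus field_simps)
      moreover have "b < a" using n(2) ap agt
        by (simp add: b_def power_int_minus field_simps power_int_add)
      moreover have "t = a powi n * b" using ap agt by (simp add: b_def power_int_minus field_simps)
      ultimately show "t \<in> {a powi k * b | k b. b \<in> B}" unfolding B_def by auto
    qed
  qed
  moreover have "\<forall>s\<in>S. \<forall>s'\<in>S. s < s' \<longrightarrow> a \<le> s' / s"
  proof (intro ballI impI)
    fix s s' assume s: "s \<in> S" "s' \<in> S" "s < s'"
    have "s > 0" using s assms(1) by auto
    hence "s' / s \<in> G" using ratio[OF s(1,2)] s by (simp add: G_def)
    thus "a \<le> s' / s" unfolding a_def using Gbdd by (simp add: cInf_lower)
  qed
  ultimately show ?thesis using agt by (intro exI[of _ a] conjI exI[of _ B]) (auto simp: B_def)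
qed

end
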